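(* Let $\mathbf{F}$ be a finite field with $q$ elements, $V$ a finite-dimensional $\mathbf{F}$-vector space, $W\subset V$ a subspace of codimension $1$, and $T\colon W\to V$ a linear map (a partial linear map on $V$ with domain $W$). For $j\ge0$ let $e(T,j)=\#\{S\colon V\to V\text{ semi-idempotent} : S|_W=T,\ \mathrm{srk}\,S=j\}$, and for $i,j\ge0$ let $e(T,i,j)=\#\{S\colon V\to V\text{ semi-idempotent}: S|_W=T,\ \operatorname{rank} S=i,\ \mathrm{srk}\,S=j\}$. Then (1) $e(T,\mathrm{srk}\,T)=q^{\mathrm{srk}\,T}\,e(T,\mathrm{srk}\,T+1)$; (2) if $\operatorname{im} T\not\subset W$, then $e(T,\operatorname{rank} T,\mathrm{srk}\,T)=q^{\mathrm{srk}\,T}\,e(T,\operatorname{rank} T,\mathrm{srk}\,T+1)$ and $e(T,\operatorname{rank} T+1,\mathrm{srk}\,T)=q^{\mathrm{srk}\,T}\,e(T,\operatorname{rank} T+1,\mathrm{srk}\,T+1)$.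
   Context: A partial linear map on $V$ is a linear map $T\colon W\to V$ from a subspace $W=\operatorname{dom}T$. The composite of partial linear maps $T,S$ has domain $S^{-1}(\operatorname{dom}T)$ and is $v\mapsto T(S(v))$; $T^0=\mathrm{id}_V$ and $T^j$ is the $j$-fold composite. The stable rank $\mathrm{srk}\,T$ of a partial linear map is $\dim \operatorname{im} T^j$ for $j\gg0$. A linear operator $S\colon V\to V$ is semi-idempotent if $V=X\oplus Y$ with $X,Y$ $S$-stable, $S|_X=\mathrm{id}$, $S|_Y$ nilpotent. *)

theory Defs
  imports "HOL-Analysis.Analysis"
begin

text \<open>The ambient finite-dimensional space V over the field 'a is modelled as 'a^'n.
  A partial linear map with domain W is a subspace W together with a function T
  that is linear on W (values of T outside W are irrelevant).\<close>

definition plinear :: "('a::field^'n) set \<Rightarrow> ('a^'n \<Rightarrow> 'a^'n) \<Rightarrow> bool" where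
  "plinear W T \<longleftrightarrow> vec.subspace W \<and>
     (\<forall>x\<in>W. \<forall>y\<in>W. T (x + y) = T x + T y) \<and>
     (\<forall>c. \<forall>x\<in>W. T (c *s x) = c *s T x)"

text \<open>Domain of the j-fold composite T^j: T^0 = id with domain V, and
  T^(j+1) = T o T^j has domain (T^j)^{-1}(W).\<close>

fun pdom :: "('a::field^'n) set \<Rightarrow> ('a^'n \<Rightarrow> 'a^'n) \<Rightarrow> nat \<Rightarrow> ('a^'n) set" where
  "pdom W T 0 = UNIV"
| "pdom W T (Suc j) = {v \<in> pdom W T j. (T ^^ j) v \<in> W}"

definition pimage :: "('a::field^'n) set \<Rightarrow> ('a^'n \<Rightarrow> 'a^'n) \<Rightarrow> nat \<Rightarrow> ('a^'n) set" where
  "pimage W T j = (T ^^ j) ` pdom W T j"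

text \<open>Stable rank: dim im T^j for all sufficiently large j.\<close>
definition srk :: "('a::field^'n) set \<Rightarrow> ('a^'n \<Rightarrow> 'a^'n) \<Rightarrow> nat" where
  "srk W T = (THE d. \<exists>N. \<forall>j\<ge>N. vec.dim (pimage W T j) = d)"

definition prank :: "('a::field^'n) set \<Rightarrow> ('a^'n \<Rightarrow> 'a^'n) \<Rightarrow> nat" where
  "prank W T = vec.dim (T ` W)"

definition semi_idempotent :: "('a::field^'n \<Rightarrow> 'a^'n) \<Rightarrow> bool" where
  "semi_idempotent S \<longleftrightarrow> (\<exists>X Y. vec.subspace X \<and> vec.subspace Y \<and>
      X \<inter> Y = {0} \<and> (\<forall>v. \<exists>x\<in>X. \<exists>y\<in>Y. v = x + y) \<and>
      S ` X \<subseteq> X \<and> S ` Y \<subseteq> Y \<and> (\<forall>x\<in>X. S x = x) \<and>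
      (\<exists>k. \<forall>y\<in>Y. (S ^^ k) y = 0))"

text \<open>e(T,j) and e(T,i,j): S ranges over linear operators V \<rightarrow> V.\<close>
definition e2 :: "('a::{field,finite}^'n) set \<Rightarrow> ('a^'n \<Rightarrow> 'a^'n) \<Rightarrow> nat \<Rightarrow> nat" where
  "e2 W T j = card {S. Vector_Spaces.linear (*s) (*s) S \<and> semi_idempotent S \<and>
      (\<forall>w\<in>W. S w = T w) \<and> srk UNIV S = j}"

definition e3 :: "('a::{field,finite}^'n) set \<Rightarrow> ('a^'n \<Rightarrow> 'a^'n) \<Rightarrow> nat \<Rightarrow> nat \<Rightarrow> nat" where
  "e3 W T i j = card {S. Vector_Spaces.linear (*s) (*s) S \<and> semi_idempotent S \<and>
      (\<forall>w\<in>W. S w = T w) \<and> prank UNIV S = i \<and> srk UNIV S = j}"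

end

theory Submission imports Defs begin

abbreviation lin :: "('a::field^'n \<Rightarrow> 'a^'n) \<Rightarrow> bool" where
  "lin f \<equiv> Vector_Spaces.linear (*s) (*s) f"

lemma lin_funpow: "lin S \<Longrightarrow> lin (S ^^ k)"
proof (induction k)
  case 0 then show ?case by (simp add: vec.linear_ident)
next
  case (Suc k)
  have "lin (S \<circ> (S ^^ k))" using Suc by (metis Vector_Spaces.linear_compose)
  then show ?case by (simp add: o_def)
qed

lemma funpow_stable:
  fixes S :: "'b \<Rightarrow> 'b"
  assumes "\<forall>v. (S ^^ Suc N) v = (S ^^ N) v"
  shows "(S ^^ (N + j)) v = (S ^^ N) v"
proof (induction j arbitrary: v)
  case 0 then show ?case by simp
next
  case (Suc j)
  have "(S ^^ (N + Suc j)) v = (S ^^ (N + j)) (S v)" by (simp add: funpow_Suc_right del: funpow.simps)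
  also have "\<dots> = (S ^^ N) (S v)" by (rule Suc)
  also have "\<dots> = (S ^^ Suc N) v" by (simp add: funpow_Suc_right del: funpow.simps)
  finally show ?case using assms by simp
qed

lemma funpow_stable':
  fixes S :: "'b \<Rightarrow> 'b"
  assumes "\<forall>v. (S ^^ Suc N) v = (S ^^ N) v" "N \<le> j"
  shows "(S ^^ j) v = (S ^^ N) v" "(S ^^ Suc j) v = (S ^^ j) v"
proof -
  obtain i where j: "j = N + i" using assms(2) le_Suc_ex by blast
  show "(S ^^ j) v = (S ^^ N) v" using funpow_stable[OF assms(1)] j by simp
  show "(S ^^ Suc j) v = (S ^^ j) v" using funpow_stable[OF assms(1), of "Suc i"] funpow_stable[OF assms(1), of i] j by simp
qed

lemma semi_idem_D:
  assumes "lin S" "semi_idempotent S"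
  shows "\<exists>N. \<forall>v. (S ^^ Suc N) v = (S ^^ N) v"
proof -
  obtain X Y k where sX: "vec.subspace X" and sY: "vec.subspace Y" and
    dec: "\<forall>v. \<exists>x\<in>X. \<exists>y\<in>Y. v = x + y" and SY: "S ` Y \<subseteq> Y" and SX: "\<forall>x\<in>X. S x = x"
    and nil: "\<forall>y\<in>Y. (S ^^ k) y = 0"
    using assms(2) unfolding semi_idempotent_def by metis
  have fx: "(S ^^ j) x = x" if "x \<in> X" for x j
    using that by (induction j) (auto simp: SX)
  have lk: "lin (S ^^ k)" "lin (S ^^ Suc k)" using lin_funpow assms(1) by blast+
  show ?thesis
  proof (intro exI allI)
    fix v
    obtain x y where xy: "x \<in> X" "y \<in> Y" "v = x + y" using dec by blast
    have "S y \<in> Y" using SY xy by blast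
    then have "(S ^^ Suc k) y = 0" using nil by (simp add: funpow_Suc_right del: funpow.simps)
    have "(S ^^ Suc k) x = x" using fx xy by blast
    then have "(S ^^ Suc k) v = x" using xy vec.linear_add[OF lk(2)] \<open>(S ^^ Suc k) y = 0\<close> by simp
    moreover have "(S ^^ k) v = x" using xy fx nil vec.linear_add[OF lk(1)] by simp
    ultimately show "(S ^^ Suc k) v = (S ^^ k) v" by simp
  qed
qed

lemma semi_idem_I:
  assumes "lin S" "\<forall>v. (S ^^ Suc N) v = (S ^^ N) v"
  shows "semi_idempotent S"
proof -
  have lN: "lin (S ^^ N)" using lin_funpow assms(1) by blast
  have twice: "(S ^^ N) ((S ^^ N) w) = (S ^^ N) w" for w
    using funpow_stable[OF assms(2), of N w] by (simp add: funpow_add)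
  let ?X = "range (S ^^ N)" and ?Y = "{v. (S ^^ N) v = 0}"
  have "vec.subspace ?X" using vec.linear_subspace_image[OF lN vec.subspace_UNIV] .
  moreover have "vec.subspace ?Y" using vec.linear_subspace_kernel[OF lN] .
  moreover have "?X \<inter> ?Y = {0}"
  proof
    show "?X \<inter> ?Y \<subseteq> {0}" using twice by auto
    show "{0} \<subseteq> ?X \<inter> ?Y" using vec.linear_0[OF lN] by (auto intro: range_eqI[of _ _ 0])
  qed
  moreover have "\<forall>v. \<exists>x\<in>?X. \<exists>y\<in>?Y. v = x + y"
  proof
    fix v
    have "(S ^^ N) (v - (S ^^ N) v) = 0" using twice vec.linear_diff[OF lN] by simp
    then show "\<exists>x\<in>?X. \<exists>y\<in>?Y. v = x + y" by (intro bexI[of _ "(S ^^ N) v"] bexI[of _ "v - (S ^^ N) v"]) auto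
  qed
  moreover have "S ` ?X \<subseteq> ?X"
  proof
    fix z assume "z \<in> S ` ?X"
    then obtain w where "z = S ((S ^^ N) w)" by auto
    then have "z = (S ^^ N) (S w)" by (simp add: funpow_swap1)
    then show "z \<in> ?X" by auto
  qed
  moreover have "S ` ?Y \<subseteq> ?Y"
  proof
    fix z assume "z \<in> S ` ?Y"
    then obtain y where y: "(S ^^ N) y = 0" "z = S y" by auto
    have "(S ^^ N) z = S ((S ^^ N) y)" unfolding y(2) by (rule funpow_swap1[symmetric])
    also have "\<dots> = 0" using y vec.linear_0[OF assms(1)] by simp
    finally show "z \<in> ?Y" by simp
  qed
  moreover have "\<forall>x\<in>?X. S x = x" using assms(2) by auto
  moreover have "\<forall>y\<in>?Y. (S ^^ N) y = 0" by simp
  ultimately show ?thesis unfolding semi_idempotent_def by blast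
qed

lemma eventually_THE:
  fixes N :: nat
  assumes "\<forall>j\<ge>N. f j = (d::nat)"
  shows "(THE d. \<exists>N. \<forall>j\<ge>N. f j = d) = d"
proof (rule the_equality)
  show "\<exists>N. \<forall>j\<ge>N. f j = d" using assms by blast
  fix d' assume "\<exists>N. \<forall>j\<ge>N. f j = d'"
  then obtain N' where N': "\<forall>j\<ge>N'. f j = d'" by blast
  have "f (max N N') = d" using assms by simp
  moreover have "f (max N N') = d'" using N' by simp
  ultimately show "d' = d" by simp
qed

lemma pdom_UNIV: "pdom UNIV S j = UNIV"
  by (induction j) auto

lemma srk_total:
  assumes "lin S" "\<forall>v. (S ^^ Suc N) v = (S ^^ N) v"
  shows "srk UNIV S = vec.dim {x. S x = x}"
proof -
  have "range (S ^^ j) = {x. S x = x}" if "j \<ge> N" for j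
  proof
    show "range (S ^^ j) \<subseteq> {x. S x = x}"
    proof
      fix z assume "z \<in> range (S ^^ j)"
      then obtain w where "z = (S ^^ j) w" by auto
      then show "z \<in> {x. S x = x}" using funpow_stable'[OF assms(2) that, of w] by simp
    qed
    show "{x. S x = x} \<subseteq> range (S ^^ j)"
    proof
      fix x assume "x \<in> {x. S x = x}"
      then have "(S ^^ j) x = x" by (induction j) auto
      then show "x \<in> range (S ^^ j)" by (metis rangeI)
    qed
  qed
  then have "\<forall>j\<ge>N. vec.dim (pimage UNIV S j) = vec.dim {x. S x = x}"
    by (simp add: pimage_def pdom_UNIV)
  then show ?thesis unfolding srk_def by (rule eventually_THE)
qed


lemma card_span_indep:
  fixes B :: "('a::{field,finite}^'n) set"
  assumes "finite B" "vec.independent B"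
  shows "card (vec.span B) = CARD('a) ^ card B"
  using assms
proof (induction B rule: finite_induct)
  case empty then show ?case by simp
next
  case (insert a B)
  have ind: "vec.independent B" and na: "a \<notin> vec.span B"
    using insert.prems insert.hyps(2) vec.independent_insert[of a B] by auto
  have eq: "vec.span (insert a B) = (\<lambda>(v, k). v + k *s a) ` (vec.span B \<times> UNIV)"
  proof
    show "vec.span (insert a B) \<subseteq> (\<lambda>(v, k). v + k *s a) ` (vec.span B \<times> UNIV)"
    proof
      fix x assume "x \<in> vec.span (insert a B)"
      then obtain k where "x - k *s a \<in> vec.span B" using vec.span_insert by blast
      then show "x \<in> (\<lambda>(v, k). v + k *s a) ` (vec.span B \<times> UNIV)"
        by (intro image_eqI[of _ _ "(x - k *s a, k)"]) auto
    qed
    show "(\<lambda>(v, k). v + k *s a) ` (vec.span B \<times> UNIV) \<subseteq> vec.span (insert a B)"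
    proof clarify
      fix v k assume "v \<in> vec.span B"
      then have "v \<in> vec.span (insert a B)" using vec.span_mono[of B "insert a B"] by blast
      moreover have "k *s a \<in> vec.span (insert a B)" by (simp add: vec.span_base vec.span_scale)
      ultimately show "v + k *s a \<in> vec.span (insert a B)" by (rule vec.span_add)
    qed
  qed
  have inj: "inj_on (\<lambda>(v, k). v + k *s a) (vec.span B \<times> UNIV)"
  proof (rule inj_onI, clarify)
    fix v k v' k' assume v: "v \<in> vec.span B" "v' \<in> vec.span B" and e: "v + k *s a = v' + k' *s a"
    have "(k - k') *s a = v' - v" proof -
      have "(k - k') *s a = k *s a - k' *s a" by (rule vec.scale_left_diff_distrib)
      also have "\<dots> = v' - v" using e by (simp add: algebra_simps)
      finally show ?thesis .
    qed
    then have kk: "(k - k') *s a \<in> vec.span B" using v vec.span_diff by metis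
    show "v = v' \<and> k = k'"
    proof (cases "k = k'")
      case True then show ?thesis using e by simp
    next
      case False
      have "(1 / (k - k')) *s ((k - k') *s a) = ((1 / (k - k')) * (k - k')) *s a" by (rule vec.scale_scale)
      also have "\<dots> = a" using False by simp
      finally have "(1 / (k - k')) *s ((k - k') *s a) = a" .
      then have "a \<in> vec.span B" using vec.span_scale[OF kk, of "1 / (k - k')"] by simp
      then show ?thesis using na by simp
    qed
  qed
  have "card (vec.span (insert a B)) = card (vec.span B \<times> (UNIV :: 'a set))"
    using eq inj card_image by metis
  also have "\<dots> = card (vec.span B) * CARD('a)" by (simp add: card_cartesian_product)
  also have "\<dots> = CARD('a) ^ card (insert a B)" using insert ind by simp
  finally show ?case .
qed

lemma card_subspace:
  fixes U :: "('a::{field,finite}^'n) set"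
  assumes "vec.subspace U"
  shows "card U = CARD('a) ^ vec.dim U"
proof -
  obtain B where B: "B \<subseteq> U" "vec.independent B" "U \<subseteq> vec.span B" "card B = vec.dim U"
    using vec.basis_exists by blast
  have "vec.span B = U" using B assms vec.span_minimal by blast
  moreover have "finite B" using B vec.finiteI_independent by blast
  ultimately show ?thesis using card_span_indep B by metis
qed

lemma dim_union_le:
  fixes A :: "('a::field^'n) set"
  assumes "finite B"
  shows "vec.dim (A \<union> B) \<le> vec.dim A + card B"
  using assms
proof (induction B rule: finite_induct)
  case empty then show ?case by simp
next
  case (insert b B)
  have "vec.dim (A \<union> insert b B) = vec.dim (insert b (A \<union> B))" by simp
  also have "\<dots> \<le> vec.dim (A \<union> B) + 1" by (simp add: vec.dim_insert)
  finally show ?case using insert by simp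
qed

lemma chain_lemma:
  fixes S :: "'a::field^'n \<Rightarrow> 'a^'n"
  assumes lS: "lin S" and sU: "vec.subspace U" and inv: "S ` U \<subseteq> U"
    and N: "\<forall>v. (S ^^ N) v \<in> U" and dimk: "CARD('n) \<le> vec.dim U + k"
  shows "(S ^^ k) v \<in> U"
proof -
  define Z where "Z j = {v. (S ^^ j) v \<in> U}" for j
  have sZ: "vec.subspace (Z j)" for j
    unfolding Z_def using vec.linear_subspace_vimage[OF lin_funpow[OF lS] sU] by (simp add: vimage_def)
  have ZS: "Z (Suc j) = {v. S v \<in> Z j}" for j
    unfolding Z_def by (simp add: funpow_Suc_right del: funpow.simps)
  have step: "Z j \<subseteq> Z (Suc j)" for j
    unfolding Z_def using inv by auto
  have mono: "Z j \<subseteq> Z (j + i)" for i j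
    by (induction i) (use step in auto)
  have stab: "Z (j + i) = Z j" if "Z (Suc j) = Z j" for i j
  proof (induction i)
    case 0 then show ?case by simp
  next
    case (Suc i)
    have "Z (Suc (j + i)) = {v. S v \<in> Z (j + i)}" by (rule ZS)
    also have "\<dots> = {v. S v \<in> Z j}" using Suc by simp
    also have "\<dots> = Z j" using ZS that by simp
    finally show ?case by simp
  qed
  have ZN: "Z N = UNIV" using N unfolding Z_def by auto
  have claim: "Z j = UNIV \<or> vec.dim U + j \<le> vec.dim (Z j)" for j
  proof (induction j)
    case 0 then show ?case by (simp add: Z_def)
  next
    case (Suc j)
    show ?case
    proof (cases "Z j = UNIV")
      case True then show ?thesis using step[of j] by auto
    next
      case False
      have ne: "Z (Suc j) \<noteq> Z j"
      proof
        assume eq: "Z (Suc j) = Z j"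
        show False
        proof (cases "N \<le> j")
          case True
          then obtain i where "j = N + i" using le_Suc_ex by blast
          then show False using mono[of N i] ZN False by auto
        next
          case False
          then obtain i where "N = j + i" using le_Suc_ex[of j N] by auto
          then show False using stab[OF eq, of i] ZN \<open>Z j \<noteq> UNIV\<close> by simp
        qed
      qed
      then have "Z j \<subset> Z (Suc j)" using step by auto
      then have "vec.dim (Z j) < vec.dim (Z (Suc j))"
        using vec.dim_psubset vec.span_eq_iff sZ by metis
      then show ?thesis using Suc False by simp
    qed
  qed
  have "Z k = UNIV"
  proof (cases "Z k = UNIV")
    case False
    then have "CARD('n) \<le> vec.dim (Z k)" using claim[of k] dimk by simp
    then have "vec.dim (UNIV :: ('a^'n) set) \<le> vec.dim (Z k)" by (metis vec_dim_card)
    then show ?thesis using vec.subspace_dim_equal[OF sZ vec.subspace_UNIV] by blast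
  qed
  then show ?thesis unfolding Z_def by auto
qed


lemma linI:
  fixes f :: "'a::field^'n \<Rightarrow> 'a^'n"
  assumes "\<And>x y. f (x + y) = f x + f y" "\<And>c x. f (c *s x) = c *s f x"
  shows "lin f"
  unfolding Vector_Spaces.linear_iff using vec.vector_space_axioms assms by auto

locale setting =
  fixes W :: "('a::{field,finite}^'n) set" and T :: "'a^'n \<Rightarrow> 'a^'n"
  assumes subW: "vec.subspace W" and dimW: "vec.dim W + 1 = CARD('n)" and plin: "plinear W T"
begin

lemma T_add: "x \<in> W \<Longrightarrow> y \<in> W \<Longrightarrow> T (x + y) = T x + T y"
  using plin unfolding plinear_def by blast

lemma T_scale: "x \<in> W \<Longrightarrow> T (c *s x) = c *s T x"
  using plin unfolding plinear_def by blast

lemma T_0: "T 0 = 0"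
proof -
  have "T (0 *s 0) = 0 *s T 0" using T_scale vec.subspace_0[OF subW] by blast
  then show ?thesis by simp
qed

lemma W_ne: "W \<noteq> UNIV"
proof
  assume "W = UNIV"
  then have "vec.dim W = CARD('n)" by (metis vec_dim_card)
  then show False using dimW by simp
qed

lemma spanW: "vec.span W = W" using subW vec.span_eq_iff by blast

lemma hyper:
  assumes "a \<notin> W"
  shows "vec.span (insert a W) = UNIV"
proof -
  have "a \<notin> vec.span W" using assms spanW by metis
  then have "vec.dim (insert a W) = vec.dim W + 1" by (simp add: vec.dim_insert)
  then have "vec.dim (UNIV :: ('a^'n) set) \<le> vec.dim (insert a W)" using dimW by (metis order_refl vec_dim_card)
  then have "vec.span (insert a W) = vec.span UNIV" using vec.dim_eq_span[of "insert a W" UNIV] by blast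
  then show ?thesis by simp
qed

definition coef :: "'a^'n \<Rightarrow> 'a^'n \<Rightarrow> 'a" where
  "coef a v = (THE k. v - k *s a \<in> W)"

lemma coef_uniq:
  assumes "a \<notin> W" "v - k *s a \<in> W" "v - k' *s a \<in> W"
  shows "k = k'"
proof (rule ccontr)
  assume ne: "k \<noteq> k'"
  have "(v - k *s a) - (v - k' *s a) \<in> W" using assms vec.subspace_diff[OF subW] by blast
  moreover have "(v - k *s a) - (v - k' *s a) = (k' - k) *s a" by (simp add: vec.scale_left_diff_distrib)
  ultimately have "(k' - k) *s a \<in> W" by simp
  then have "(1 / (k' - k)) *s ((k' - k) *s a) \<in> W" using vec.subspace_scale[OF subW] by blast
  moreover have "(1 / (k' - k)) *s ((k' - k) *s a) = a"
  proof -
    have "(1 / (k' - k)) *s ((k' - k) *s a) = ((1 / (k' - k)) * (k' - k)) *s a" by (rule vec.scale_scale)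
    also have "\<dots> = a" using ne by simp
    finally show ?thesis .
  qed
  ultimately show False using assms(1) by simp
qed

lemma coef_ex: "a \<notin> W \<Longrightarrow> \<exists>k. v - k *s a \<in> W"
  using hyper[of a] vec.span_insert[of a W] spanW by blast

lemma coef: "a \<notin> W \<Longrightarrow> v - coef a v *s a \<in> W"
  unfolding coef_def by (rule theI') (use coef_ex coef_uniq in blast)

lemma coef_eq: "a \<notin> W \<Longrightarrow> v - k *s a \<in> W \<Longrightarrow> coef a v = k"
  using coef coef_uniq by blast

lemma coef_W: "a \<notin> W \<Longrightarrow> coef a v = 0 \<longleftrightarrow> v \<in> W"
  using coef[of a v] coef_eq[of a v 0] by auto

lemma coef_self: "a \<notin> W \<Longrightarrow> coef a a = 1"
  using coef_eq[of a a 1] vec.subspace_0[OF subW] by simp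

lemma coef_add: "a \<notin> W \<Longrightarrow> coef a (v + w) = coef a v + coef a w"
proof -
  assume a: "a \<notin> W"
  have "(v - coef a v *s a) + (w - coef a w *s a) \<in> W"
    using coef[OF a] vec.subspace_add[OF subW] by blast
  moreover have "(v - coef a v *s a) + (w - coef a w *s a) = (v + w) - (coef a v + coef a w) *s a"
    by (simp add: vec.scale_left_distrib algebra_simps)
  ultimately show ?thesis using coef_eq[OF a] by simp
qed

lemma coef_scale: "a \<notin> W \<Longrightarrow> coef a (c *s v) = c * coef a v"
proof -
  assume a: "a \<notin> W"
  have "c *s (v - coef a v *s a) \<in> W"
    using coef[OF a] vec.subspace_scale[OF subW] by blast
  moreover have "c *s (v - coef a v *s a) = c *s v - (c * coef a v) *s a"
    by (simp add: vec.scale_right_diff_distrib)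
  ultimately show ?thesis using coef_eq[OF a] by simp
qed

lemma coef_diff: "a \<notin> W \<Longrightarrow> coef a (v - w) = coef a v - coef a w"
  using coef_add[of a "v - w" w] by simp

definition Ext :: "'a^'n \<Rightarrow> 'a^'n \<Rightarrow> 'a^'n \<Rightarrow> 'a^'n" where
  "Ext a u v = T (v - coef a v *s a) + coef a v *s u"

definition ext :: "('a^'n \<Rightarrow> 'a^'n) \<Rightarrow> bool" where
  "ext S \<longleftrightarrow> lin S \<and> (\<forall>w\<in>W. S w = T w)"

lemma Ext_lin:
  assumes a: "a \<notin> W"
  shows "lin (Ext a u)"
proof (rule linI)
  fix x y
  have e1: "x + y - coef a (x + y) *s a = (x - coef a x *s a) + (y - coef a y *s a)"
    using coef_add[OF a] by (simp add: vec.scale_left_distrib algebra_simps)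
  have t: "T (x + y - coef a (x + y) *s a) = T (x - coef a x *s a) + T (y - coef a y *s a)"
    unfolding e1 by (rule T_add[OF coef[OF a] coef[OF a]])
  show "Ext a u (x + y) = Ext a u x + Ext a u y"
    unfolding Ext_def unfolding t unfolding coef_add[OF a]
    by (simp add: vec.scale_left_distrib algebra_simps)
next
  fix c x
  have e1: "c *s x - coef a (c *s x) *s a = c *s (x - coef a x *s a)"
    using coef_scale[OF a] by (simp add: vec.scale_right_diff_distrib)
  have t: "T (c *s x - coef a (c *s x) *s a) = c *s T (x - coef a x *s a)"
    unfolding e1 by (rule T_scale[OF coef[OF a]])
  show "Ext a u (c *s x) = c *s Ext a u x"
    unfolding Ext_def unfolding t unfolding coef_scale[OF a]
    by (simp add: vec.scale_right_distrib)
qed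

lemma Ext_W: "a \<notin> W \<Longrightarrow> w \<in> W \<Longrightarrow> Ext a u w = T w"
proof -
  assume "a \<notin> W" "w \<in> W"
  then have "coef a w = 0" using coef_W by blast
  then show ?thesis unfolding Ext_def by simp
qed

lemma Ext_a: "a \<notin> W \<Longrightarrow> Ext a u a = u"
  unfolding Ext_def using coef_self T_0 by simp

lemma Ext_ext: "a \<notin> W \<Longrightarrow> ext (Ext a u)"
  unfolding ext_def using Ext_lin Ext_W by blast

lemma Ext_unique:
  assumes a: "a \<notin> W" and S: "ext S"
  shows "S = Ext a (S a)"
proof
  fix v
  have l: "lin S" using S ext_def by blast
  have "S v = S ((v - coef a v *s a) + coef a v *s a)" by simp
  also have "\<dots> = S (v - coef a v *s a) + coef a v *s S a"
    using vec.linear_add[OF l, of "v - coef a v *s a" "coef a v *s a"] vec.linear_scale[OF l] by simp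
  also have "\<dots> = Ext a (S a) v" unfolding Ext_def using S coef[OF a] ext_def by simp
  finally show "S v = Ext a (S a) v" .
qed

definition a0 :: "'a^'n" where "a0 = (SOME a. a \<notin> W)"

lemma a0: "a0 \<notin> W" unfolding a0_def using W_ne by (metis UNIV_eq_I someI_ex)

definition L0 where "L0 = Ext a0 0"

lemma L0: "ext L0" unfolding L0_def using Ext_ext a0 by blast

lemma ext_lin: "ext S \<Longrightarrow> lin S" unfolding ext_def by blast
lemma ext_T: "ext S \<Longrightarrow> w \<in> W \<Longrightarrow> S w = T w" unfolding ext_def by blast

abbreviation P where "P \<equiv> pdom W T"

lemma P_Suc: "P (Suc j) = {v \<in> P j. (T ^^ j) v \<in> W}" by simp

declare pdom.simps(2)[simp del]

lemma pdom_char: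
  assumes "ext S"
  shows "P j = {v. \<forall>i<j. (S ^^ i) v \<in> W} \<and> (\<forall>v\<in>P j. (T ^^ j) v = (S ^^ j) v)"
proof (induction j)
  case 0 then show ?case by simp
next
  case (Suc j)
  have 1: "P (Suc j) = {v. \<forall>i<Suc j. (S ^^ i) v \<in> W}"
    using Suc by (auto simp: less_Suc_eq P_Suc)
  have "(T ^^ Suc j) v = (S ^^ Suc j) v" if "v \<in> P (Suc j)" for v
  proof -
    have "v \<in> P j" "(T ^^ j) v \<in> W" using that by (auto simp: P_Suc)
    then show ?thesis using Suc ext_T[OF assms] by simp
  qed
  then show ?case using 1 by blast
qed

lemma pdom_char1: "ext S \<Longrightarrow> v \<in> P j \<longleftrightarrow> (\<forall>i<j. (S ^^ i) v \<in> W)"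
  using pdom_char by blast

lemma pdom_char2: "ext S \<Longrightarrow> v \<in> P j \<Longrightarrow> (T ^^ j) v = (S ^^ j) v"
  using pdom_char by blast

lemma pdom_anti: "j \<le> j' \<Longrightarrow> P j' \<subseteq> P j"
  using pdom_char1[OF L0] by auto

lemma pdom_shift: "ext S \<Longrightarrow> v \<in> P (Suc j) \<longleftrightarrow> v \<in> W \<and> S v \<in> P j"
  using pdom_char1[of S] by (simp add: All_less_Suc2 funpow_Suc_right del: funpow.simps)

lemma pdom_subspace: "vec.subspace (P j)"
proof -
  have "P j = (\<Inter>i\<in>{..<j}. (L0 ^^ i) -` W) \<inter> UNIV" using pdom_char1[OF L0] by auto
  moreover have "vec.subspace ((L0 ^^ i) -` W)" for i
    using vec.linear_subspace_vimage[OF lin_funpow[OF ext_lin[OF L0]] subW] .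
  ultimately show ?thesis using vec.subspace_Inter vec.subspace_UNIV
    by (metis (no_types, lifting) imageE vec.subspace_inter)
qed

lemma pdom_stops: "\<exists>j. P (Suc j) = P j"
proof (rule ccontr)
  assume "\<not> ?thesis"
  then have ne: "P (Suc j) \<noteq> P j" for j by blast
  have "card (P j) + j \<le> card (UNIV :: ('a^'n) set)" for j
  proof (induction j)
    case 0 then show ?case by simp
  next
    case (Suc j)
    have "P (Suc j) \<subset> P j" using ne pdom_anti[of j "Suc j"] by auto
    then have "card (P (Suc j)) < card (P j)" by (simp add: psubset_card_mono)
    then show ?case using Suc by simp
  qed
  from this[of "Suc (card (UNIV :: ('a^'n) set))"] show False by simp
qed

definition m where "m = (LEAST j. P (Suc j) = P j)"

lemma m_stop: "P (Suc m) = P m"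
  unfolding m_def using pdom_stops by (rule LeastI_ex)

lemma m_stable: "P (m + k) = P m"
proof (induction k)
  case 0 then show ?case by simp
next
  case (Suc k)
  have "v \<in> P (Suc (m + k)) \<longleftrightarrow> v \<in> P (Suc m)" for v
    using pdom_shift[OF L0] Suc by simp
  then show ?case using m_stop by auto
qed

definition D where "D = P m"

lemma D_char: "ext S \<Longrightarrow> D = {v. \<forall>i. (S ^^ i) v \<in> W}"
proof -
  assume S: "ext S"
  have "v \<in> D \<longleftrightarrow> (\<forall>i. (S ^^ i) v \<in> W)" for v
  proof
    assume "v \<in> D"
    then have "v \<in> P (m + Suc i)" for i using m_stable[of "Suc i"] unfolding D_def by simp
    show "\<forall>i. (S ^^ i) v \<in> W"
    proof
      fix i
      have "i < m + Suc i" by simp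
      then show "(S ^^ i) v \<in> W" using pdom_char1[OF S, of v "m + Suc i"] \<open>\<And>i. v \<in> P (m + Suc i)\<close> by blast
    qed
  next
    assume "\<forall>i. (S ^^ i) v \<in> W"
    then show "v \<in> D" unfolding D_def using pdom_char1[OF S] by blast
  qed
  then show ?thesis by blast
qed

lemma D_sub: "vec.subspace D" unfolding D_def by (rule pdom_subspace)

lemma D_W: "D \<subseteq> W" using D_char[OF L0] by (metis (mono_tags, lifting) funpow_0 mem_Collect_eq subsetI)

lemma D_inv: "ext S \<Longrightarrow> v \<in> D \<Longrightarrow> S v \<in> D"
proof -
  assume S: "ext S" and v: "v \<in> D"
  have "(S ^^ i) (S v) \<in> W" for i
  proof -
    have "(S ^^ Suc i) v \<in> W" using v D_char[OF S] by blast
    moreover have "(S ^^ Suc i) v = (S ^^ i) (S v)" by (simp only: funpow_Suc_right comp_apply)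
    ultimately show ?thesis by simp
  qed
  then show ?thesis using D_char[OF S] by simp
qed

lemma D_pow: "ext S \<Longrightarrow> v \<in> D \<Longrightarrow> (S ^^ j) v \<in> D"
  by (induction j) (auto simp: D_inv)

lemma D_pow_eq: "ext S \<Longrightarrow> ext S' \<Longrightarrow> v \<in> D \<Longrightarrow> (S ^^ j) v = (S' ^^ j) v"
proof (induction j)
  case 0 then show ?case by simp
next
  case (Suc j)
  have w: "(S' ^^ j) v \<in> W" using D_pow[OF Suc.prems(2,3)] D_W by blast
  show ?case using Suc.IH[OF Suc.prems] ext_T[OF Suc.prems(1) w] ext_T[OF Suc.prems(2) w] by simp
qed

lemma m_pos: "m \<ge> 1"
proof (rule ccontr)
  assume "\<not> m \<ge> 1"
  then have "m = 0" by simp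
  then have "P 1 = P 0" using m_stop by simp
  moreover have "P 1 = W" by (auto simp: P_Suc)
  ultimately show False using W_ne by simp
qed

definition c where "c = (SOME c. c \<in> P (m - 1) \<and> c \<notin> P m)"

lemma c: "c \<in> P (m - 1)" "c \<notin> P m"
proof -
  have "P (Suc (m - 1)) \<noteq> P (m - 1)" using not_less_Least[of "m - 1" "\<lambda>j. P (Suc j) = P j"] m_pos
    unfolding m_def by simp
  then have "P m \<noteq> P (m - 1)" using m_pos by simp
  moreover have "P m \<subseteq> P (m - 1)" using pdom_anti by simp
  ultimately have "\<exists>c. c \<in> P (m - 1) \<and> c \<notin> P m" by blast
  then show "c \<in> P (m - 1)" "c \<notin> P m" unfolding c_def by (metis (mono_tags, lifting) someI_ex)+
qed

definition b where "b j = (T ^^ j) c"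

lemma b_ext: "ext S \<Longrightarrow> j \<le> m - 1 \<Longrightarrow> (S ^^ j) c = b j"
  unfolding b_def using pdom_char2[of S c j] c(1) pdom_anti[of j "m - 1"] by auto

definition v0 where "v0 = b (m - 1)"

lemma v0: "v0 \<notin> W"
proof -
  have "c \<in> P (Suc (m - 1)) \<longleftrightarrow> (T ^^ (m - 1)) c \<in> W" using c(1) by (simp add: P_Suc)
  then show ?thesis using c(2) m_pos unfolding v0_def b_def by simp
qed

lemma c_pow_W: "ext S \<Longrightarrow> i < m - 1 \<Longrightarrow> (S ^^ i) c \<in> W"
  using c(1) pdom_char1 by blast

lemma span_all: "UNIV \<subseteq> vec.span (D \<union> b ` {..<m})"
proof -
  have "j \<le> m \<Longrightarrow> P (m - j) \<subseteq> vec.span (D \<union> b ` {..<j})" for j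
  proof (induction j)
    case 0 then show ?case unfolding D_def using vec.span_superset by auto
  next
    case (Suc j)
    define i where "i = m - Suc j"
    have ij: "i + j = m - 1" "m - j = Suc i" using Suc.prems unfolding i_def by auto
    have lL: "lin (L0 ^^ k)" for k using lin_funpow ext_lin L0 by blast
    have bj: "b j = (L0 ^^ j) c" using b_ext[OF L0, of j] ij by simp
    have bjP: "(L0 ^^ k) (b j) \<in> W" if "k < i" for k
      using c_pow_W[OF L0, of "k + j"] that ij bj by (simp add: funpow_add)
    have "(L0 ^^ i) ((L0 ^^ j) c) = (L0 ^^ (i + j)) c" by (simp add: funpow_add)
    then have bjv: "(L0 ^^ i) (b j) = v0"
      using bj ij b_ext[OF L0, of "m - 1"] unfolding v0_def by simp
    show ?case
    proof
      fix v assume "v \<in> P (m - Suc j)"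
      then have vP: "\<forall>k<i. (L0 ^^ k) v \<in> W" using pdom_char1[OF L0] i_def by blast
      define k where "k = coef v0 ((L0 ^^ i) v)"
      define v' where "v' = v - k *s b j"
      have "(L0 ^^ i') v' \<in> W" if "i' < Suc i" for i'
      proof (cases "i' < i")
        case True
        have "(L0 ^^ i') v' = (L0 ^^ i') v - k *s (L0 ^^ i') (b j)"
          unfolding v'_def using vec.linear_diff[OF lL] vec.linear_scale[OF lL] by simp
        then show ?thesis using vP bjP True vec.subspace_diff[OF subW] vec.subspace_scale[OF subW] by metis
      next
        case False
        then have "i' = i" using that by simp
        have "(L0 ^^ i') v' = (L0 ^^ i) v - k *s v0"
          unfolding v'_def using vec.linear_diff[OF lL] vec.linear_scale[OF lL] bjv \<open>i' = i\<close> by simp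
        then show ?thesis using coef[OF v0] k_def by simp
      qed
      then have "v' \<in> P (m - j)" using pdom_char1[OF L0] ij by simp
      then have "v' \<in> vec.span (D \<union> b ` {..<j})" using Suc.IH[OF Suc_leD[OF Suc.prems]] by blast
      moreover have "D \<union> b ` {..<j} \<subseteq> D \<union> b ` {..<Suc j}" by auto
      ultimately have 1: "v' \<in> vec.span (D \<union> b ` {..<Suc j})"
        using vec.span_mono by blast
      have "b j \<in> vec.span (D \<union> b ` {..<Suc j})" by (simp add: vec.span_base)
      then have "k *s b j \<in> vec.span (D \<union> b ` {..<Suc j})" by (rule vec.span_scale)
      then have "v' + k *s b j \<in> vec.span (D \<union> b ` {..<Suc j})" using 1 vec.span_add by blast
      then show "v \<in> vec.span (D \<union> b ` {..<Suc j})" unfolding v'_def by simp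
    qed
  qed
  from this[of m] show ?thesis by simp
qed

lemma dim_D: "CARD('n) \<le> vec.dim D + m"
proof -
  have "vec.dim (UNIV :: ('a^'n) set) \<le> vec.dim (vec.span (D \<union> b ` {..<m}))"
    using span_all vec.dim_subset by blast
  also have "\<dots> = vec.dim (D \<union> b ` {..<m})" by simp
  also have "\<dots> \<le> vec.dim D + card (b ` {..<m})" by (rule dim_union_le) simp
  also have "\<dots> \<le> vec.dim D + m" using card_image_le[of "{..<m}" b] by simp
  finally show ?thesis by (metis vec_dim_card)
qed

end


lemma lin_diff:
  fixes f g :: "'a::field^'n \<Rightarrow> 'a^'n"
  assumes "lin f" "lin g"
  shows "lin (\<lambda>v. f v - g v)"
  by (rule linI) (simp_all add: vec.linear_add[OF assms(1)] vec.linear_add[OF assms(2)]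
      vec.linear_scale[OF assms(1)] vec.linear_scale[OF assms(2)] vec.scale_right_diff_distrib)

lemma Fix_sub:
  fixes S :: "'a::field^'n \<Rightarrow> 'a^'n"
  assumes "lin S"
  shows "vec.subspace {x. S x = x}"
proof -
  have "{x. S x = x} = {x. S x - x = 0}" by auto
  then show ?thesis using vec.linear_subspace_kernel[OF lin_diff[OF assms vec.linear_ident]] by simp
qed

lemma funpow_comm: "(f ^^ a) ((f ^^ b) x) = (f ^^ b) ((f ^^ a) x)"
proof -
  have "(f ^^ a) ((f ^^ b) x) = (f ^^ (a + b)) x" by (simp add: funpow_add)
  also have "\<dots> = (f ^^ (b + a)) x" by (simp add: add.commute)
  also have "\<dots> = (f ^^ b) ((f ^^ a) x)" by (simp add: funpow_add)
  finally show ?thesis .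
qed

lemma fix_pow: "S x = x \<Longrightarrow> (S ^^ j) x = x"
  by (induction j) auto

context setting
begin

lemma TW_sub: "vec.subspace (T ` W)"
proof -
  have "T ` W = L0 ` W" using ext_T[OF L0] by auto
  then show ?thesis using vec.linear_subspace_image[OF ext_lin[OF L0] subW] by simp
qed

definition F where "F = {w \<in> W. T w = w}"

lemma F_sub: "vec.subspace F"
proof -
  have "F = W \<inter> {x. L0 x = x}" unfolding F_def using ext_T[OF L0] by auto
  then show ?thesis using vec.subspace_inter subW Fix_sub[OF ext_lin[OF L0]] by simp
qed

lemma F_W: "F \<subseteq> W" unfolding F_def by auto

lemma Fix_W: "ext S \<Longrightarrow> {x. S x = x} \<inter> W = F"
  unfolding F_def using ext_T by auto

lemma F_D: "F \<subseteq> D"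
proof
  fix f assume f: "f \<in> F"
  then have "L0 f = f" using Fix_W[OF L0] by auto
  then have "(L0 ^^ i) f = f" for i by (rule fix_pow)
  then show "f \<in> D" using D_char[OF L0] f F_W by auto
qed

lemma F_TW: "F \<subseteq> T ` W" unfolding F_def by force

definition Y where "Y = (\<lambda>z. L0 z - z) ` D"

lemma Y_ext: "ext S \<Longrightarrow> Y = (\<lambda>z. S z - z) ` D"
  unfolding Y_def using D_W ext_T[OF L0] ext_T by (intro image_cong) auto

lemma Y_sub: "vec.subspace Y"
  unfolding Y_def using vec.linear_subspace_image[OF lin_diff[OF ext_lin[OF L0] vec.linear_ident] D_sub] .

lemma Sx_ext: "ext (Ext v0 u)" using Ext_ext v0 by blast

lemma Sx_v0: "Ext v0 u v0 = u" using Ext_a v0 by blast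

lemma S_c_m: "ext S \<Longrightarrow> (S ^^ (m - 1)) c = v0" using b_ext v0_def by simp

lemma S_c_m': "ext S \<Longrightarrow> (S ^^ m) c = S v0"
proof -
  assume S: "ext S"
  obtain k where k: "m = Suc k" using m_pos by (cases m) auto
  have "(S ^^ m) c = S ((S ^^ (m - 1)) c)" using k by simp
  then show ?thesis using S_c_m[OF S] by simp
qed

lemma rank_Sx: "prank UNIV (Ext v0 u) = (if u \<in> T ` W then prank W T else prank W T + 1)"
proof -
  let ?S = "Ext v0 u"
  have eS: "ext ?S" by (rule Sx_ext)
  have lS: "lin ?S" using eS ext_lin by blast
  have spTW: "vec.span (T ` W) = T ` W" using TW_sub vec.span_eq_iff by blast
  have "range ?S = vec.span (insert u (T ` W))"
  proof
    show "range ?S \<subseteq> vec.span (insert u (T ` W))"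
    proof
      fix y assume "y \<in> range ?S"
      then obtain v where y: "y = ?S v" by auto
      have "y - coef v0 v *s u = T (v - coef v0 v *s v0)" unfolding y Ext_def by simp
      also have "\<dots> \<in> T ` W" using coef[OF v0] by blast
      finally show "y \<in> vec.span (insert u (T ` W))" using vec.span_insert spTW by blast
    qed
    show "vec.span (insert u (T ` W)) \<subseteq> range ?S"
    proof
      fix y assume "y \<in> vec.span (insert u (T ` W))"
      then obtain k where "y - k *s u \<in> T ` W" using vec.span_insert spTW by blast
      then obtain w where w: "w \<in> W" "y - k *s u = T w" by auto
      have "?S (w + k *s v0) = ?S w + k *s ?S v0" using vec.linear_add[OF lS] vec.linear_scale[OF lS] by simp
      also have "\<dots> = T w + k *s u" using ext_T[OF eS w(1)] Sx_v0 by simp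
      also have "\<dots> = y" using w(2) by (metis diff_add_cancel)
      finally show "y \<in> range ?S" by (metis rangeI)
    qed
  qed
  then have "prank UNIV ?S = vec.dim (insert u (T ` W))" unfolding prank_def by simp
  then show ?thesis unfolding prank_def using vec.dim_insert[of u "T ` W"] spTW by simp
qed

lemma v0_TW:
  assumes "\<not> T ` W \<subseteq> W"
  shows "v0 \<in> T ` W"
proof -
  have "m \<noteq> 1"
  proof
    assume "m = 1"
    then have "D = W" unfolding D_def by (simp add: P_Suc)
    then have "T ` W \<subseteq> W" using D_inv[OF L0] ext_T[OF L0] by auto
    then show False using assms by simp
  qed
  then have m2: "m \<ge> 2" using m_pos by simp
  obtain k where k: "m = Suc (Suc k)" using m2 by (cases m; cases "m - 1") auto
  have "(L0 ^^ (m - 1)) c = L0 ((L0 ^^ (m - 2)) c)" using k by simp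
  moreover have "(L0 ^^ (m - 2)) c \<in> W" using c_pow_W[OF L0, of "m - 2"] m2 by simp
  ultimately have "v0 = T ((L0 ^^ (m - 2)) c)" using S_c_m[OF L0] ext_T[OF L0] by simp
  then show ?thesis using \<open>(L0 ^^ (m - 2)) c \<in> W\<close> by blast
qed

end


locale setting2 = setting W T for W :: "('a::{field,finite}^'n) set" and T +
  fixes S0 assumes S0ext: "ext S0" and S0semi: "semi_idempotent S0"
begin

definition K where "K = (SOME K. \<forall>v. (S0 ^^ Suc K) v = (S0 ^^ K) v)"

lemma K: "\<forall>v. (S0 ^^ Suc K) v = (S0 ^^ K) v"
  unfolding K_def using semi_idem_D[OF ext_lin[OF S0ext] S0semi] by (rule someI_ex)

lemma K_D: "ext S \<Longrightarrow> z \<in> D \<Longrightarrow> (S ^^ Suc K) z = (S ^^ K) z"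
proof -
  assume S: "ext S" and z: "z \<in> D"
  have "(S ^^ Suc K) z = (S0 ^^ Suc K) z" by (rule D_pow_eq[OF S S0ext z])
  also have "\<dots> = (S0 ^^ K) z" using K by blast
  also have "\<dots> = (S ^^ K) z" by (rule D_pow_eq[OF S S0ext z, symmetric])
  finally show ?thesis .
qed

lemma Y_kill: "ext S \<Longrightarrow> y \<in> Y \<Longrightarrow> (S ^^ K) y = 0"
proof -
  assume S: "ext S" and y: "y \<in> Y"
  then obtain z where z: "z \<in> D" "y = S z - z" using Y_ext by blast
  have l: "lin (S ^^ K)" using lin_funpow ext_lin[OF S] by blast
  have "(S ^^ K) y = (S ^^ K) (S z) - (S ^^ K) z" using z vec.linear_diff[OF l] by simp
  also have "(S ^^ K) (S z) = (S ^^ Suc K) z" by (simp only: funpow_Suc_right comp_apply)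
  finally show ?thesis using K_D[OF S z(1)] by simp
qed

lemma FY: "f \<in> F \<Longrightarrow> f \<in> Y \<Longrightarrow> f = 0"
proof -
  assume f: "f \<in> F" "f \<in> Y"
  then have "L0 f = f" using Fix_W[OF L0] by auto
  then have "(L0 ^^ K) f = f" by (rule fix_pow)
  then show ?thesis using Y_kill[OF L0 f(2)] by simp
qed

lemma decomp: "z \<in> D \<Longrightarrow> (S0 ^^ K) z \<in> F \<and> z - (S0 ^^ K) z \<in> Y"
proof -
  assume z: "z \<in> D"
  have 1: "(S0 ^^ K) z \<in> D" using D_pow[OF S0ext z] .
  have "S0 ((S0 ^^ K) z) = (S0 ^^ K) z" using K by simp
  then have "(S0 ^^ K) z \<in> F" using 1 D_W Fix_W[OF S0ext] by auto
  moreover have "z - (S0 ^^ j) z \<in> Y" for j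
  proof (induction j)
    case 0 then show ?case using vec.subspace_0[OF Y_sub] by simp
  next
    case (Suc j)
    have l: "lin S0" using ext_lin[OF S0ext] .
    have w: "- (S0 ^^ j) z \<in> D" using D_pow[OF S0ext z] vec.subspace_neg[OF D_sub] by blast
    have "S0 (- (S0 ^^ j) z) - (- (S0 ^^ j) z) \<in> Y" using Y_ext[OF S0ext] w by blast
    moreover have "S0 (- (S0 ^^ j) z) - (- (S0 ^^ j) z) = (S0 ^^ j) z - (S0 ^^ Suc j) z"
      using vec.linear_neg[OF l] by simp
    ultimately have "(S0 ^^ j) z - (S0 ^^ Suc j) z \<in> Y" by simp
    then have "(z - (S0 ^^ j) z) + ((S0 ^^ j) z - (S0 ^^ Suc j) z) \<in> Y"
      using Suc vec.subspace_add[OF Y_sub] by blast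
    then show ?case by simp
  qed
  ultimately show ?thesis by blast
qed

lemma Y_D: "Y \<subseteq> D"
proof
  fix y assume "y \<in> Y"
  then obtain z where "z \<in> D" "y = L0 z - z" unfolding Y_def by blast
  then show "y \<in> D" using D_inv[OF L0] vec.subspace_diff[OF D_sub] by blast
qed

lemma srkT: "srk W T = vec.dim F"
proof -
  have "pimage W T j = F" if j: "j \<ge> m + K" for j
  proof -
    have Pj: "P j = D" unfolding D_def using m_stable[of "j - m"] j by simp
    have "pimage W T j = (S0 ^^ j) ` D"
      unfolding pimage_def Pj using pdom_char2[OF S0ext] Pj by (auto simp: image_def)
    also have "\<dots> = F"
    proof
      show "(S0 ^^ j) ` D \<subseteq> F"
      proof
        fix x assume "x \<in> (S0 ^^ j) ` D"
        then obtain z where z: "z \<in> D" "x = (S0 ^^ j) z" by auto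
        have "(S0 ^^ Suc j) z = (S0 ^^ j) z" using funpow_stable'(2)[OF K, of j] j by simp
        then have "S0 x = x" using z by simp
        moreover have "x \<in> W" using z D_pow[OF S0ext] D_W by blast
        ultimately show "x \<in> F" using Fix_W[OF S0ext] by auto
      qed
      show "F \<subseteq> (S0 ^^ j) ` D"
      proof
        fix f assume f: "f \<in> F"
        then have "S0 f = f" using Fix_W[OF S0ext] by auto
        then have "(S0 ^^ j) f = f" by (rule fix_pow)
        then show "f \<in> (S0 ^^ j) ` D" using f F_D by (metis image_eqI subsetD)
      qed
    qed
    finally show ?thesis .
  qed
  then have "\<forall>j\<ge>m + K. vec.dim (pimage W T j) = vec.dim F" by simp
  then show ?thesis unfolding srk_def by (rule eventually_THE)
qed

lemma A0: "(semi_idempotent (Ext v0 u) \<and> srk UNIV (Ext v0 u) = vec.dim F) \<longleftrightarrow> u \<in> D"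
proof -
  let ?S = "Ext v0 u"
  have eS: "ext ?S" by (rule Sx_ext)
  have lS: "lin ?S" using eS ext_lin by blast
  have lP: "lin (?S ^^ j)" for j using lin_funpow lS by blast
  have FFix: "F \<subseteq> {x. ?S x = x}" using Fix_W[OF eS] by auto
  show ?thesis
  proof
    assume "semi_idempotent ?S \<and> srk UNIV ?S = vec.dim F"
    then have semi: "semi_idempotent ?S" and sr: "srk UNIV ?S = vec.dim F" by auto
    obtain N where N: "\<forall>v. (?S ^^ Suc N) v = (?S ^^ N) v" using semi_idem_D[OF lS semi] by blast
    have "vec.dim {x. ?S x = x} = vec.dim F" using srk_total[OF lS N] sr by simp
    then have FixF: "{x. ?S x = x} = F"
      using vec.subspace_dim_equal[OF F_sub Fix_sub[OF lS] FFix] by simp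
    have "\<forall>v. (?S ^^ N) v \<in> D"
    proof
      fix v
      have "?S ((?S ^^ N) v) = (?S ^^ N) v" using N by simp
      then show "(?S ^^ N) v \<in> D" using FixF F_D by auto
    qed
    then have "(?S ^^ m) c \<in> D"
      using chain_lemma[OF lS D_sub _ _ dim_D] D_inv[OF eS] by blast
    then show "u \<in> D" using S_c_m'[OF eS] Sx_v0 by simp
  next
    assume u: "u \<in> D"
    let ?Z = "{v. (?S ^^ m) v \<in> D}"
    have sZ: "vec.subspace ?Z"
      using vec.linear_subspace_vimage[OF lP D_sub] by (simp add: vimage_def)
    have "D \<subseteq> ?Z" using D_pow[OF eS] by auto
    moreover have "b ` {..<m} \<subseteq> ?Z"
    proof
      fix x assume "x \<in> b ` {..<m}"
      then obtain j where j: "j < m" "x = b j" by auto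
      have "(?S ^^ m) x = (?S ^^ m) ((?S ^^ j) c)" using b_ext[OF eS, of j] j by simp
      also have "\<dots> = (?S ^^ j) ((?S ^^ m) c)" by (rule funpow_comm)
      also have "\<dots> = (?S ^^ j) u" using S_c_m'[OF eS] Sx_v0 by simp
      finally show "x \<in> ?Z" using D_pow[OF eS u] by simp
    qed
    ultimately have "D \<union> b ` {..<m} \<subseteq> ?Z" by (rule Un_least)
    then have spZ: "vec.span (D \<union> b ` {..<m}) \<subseteq> ?Z" using vec.span_minimal[OF _ sZ] by simp
    have Zall: "(?S ^^ m) v \<in> D" for v
    proof -
      have "v \<in> ?Z" using span_all spZ by (meson UNIV_I subsetD)
      then show ?thesis by simp
    qed
    have N: "\<forall>v. (?S ^^ Suc (K + m)) v = (?S ^^ (K + m)) v"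
    proof
      fix v
      have "(?S ^^ Suc (K + m)) v = (?S ^^ Suc K) ((?S ^^ m) v)" by (simp add: funpow_add)
      also have "\<dots> = (?S ^^ K) ((?S ^^ m) v)" using K_D[OF eS Zall] .
      also have "\<dots> = (?S ^^ (K + m)) v" by (simp add: funpow_add)
      finally show "(?S ^^ Suc (K + m)) v = (?S ^^ (K + m)) v" .
    qed
    have semi: "semi_idempotent ?S" by (rule semi_idem_I[OF lS N])
    have "{x. ?S x = x} \<subseteq> F"
    proof
      fix x assume "x \<in> {x. ?S x = x}"
      then have fx: "?S x = x" by simp
      then have "x = (?S ^^ (K + m)) x" using fix_pow[of ?S x "K + m"] by simp
      also have "\<dots> = (?S ^^ K) ((?S ^^ m) x)" by (simp add: funpow_add)
      finally have xe: "x = (?S ^^ K) ((?S ^^ m) x)" .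
      have "(?S ^^ K) ((?S ^^ m) x) \<in> D" by (rule D_pow[OF eS Zall])
      then have "x \<in> D" by (subst xe)
      then show "x \<in> F" using fx D_W Fix_W[OF eS] by auto
    qed
    then have "{x. ?S x = x} = F" using FFix by blast
    then show "semi_idempotent ?S \<and> srk UNIV ?S = vec.dim F" using semi srk_total[OF lS N] by simp
  qed
qed


lemma A1: "(semi_idempotent (Ext v0 u) \<and> srk UNIV (Ext v0 u) = vec.dim F + 1) \<longleftrightarrow> u - v0 \<in> Y"
proof -
  let ?S = "Ext v0 u"
  have eS: "ext ?S" by (rule Sx_ext)
  have lS: "lin ?S" using eS ext_lin by blast
  have lP: "lin (?S ^^ j)" for j using lin_funpow lS by blast
  have FFix: "F \<subseteq> {x. ?S x = x}" using Fix_W[OF eS] by auto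
  have sFix: "vec.subspace {x. ?S x = x}" by (rule Fix_sub[OF lS])
  have spF: "vec.span F = F" using F_sub vec.span_eq_iff by blast
  have spD: "vec.span D = D" using D_sub vec.span_eq_iff by blast
  have phi0: "coef v0 w = 0" if "w \<in> W" for w using coef_W[OF v0] that by blast
  show ?thesis
  proof
    assume "semi_idempotent ?S \<and> srk UNIV ?S = vec.dim F + 1"
    then have semi: "semi_idempotent ?S" and sr: "srk UNIV ?S = vec.dim F + 1" by auto
    obtain N where N: "\<forall>v. (?S ^^ Suc N) v = (?S ^^ N) v" using semi_idem_D[OF lS semi] by blast
    have dFix: "vec.dim {x. ?S x = x} = vec.dim F + 1" using srk_total[OF lS N] sr by simp
    have "\<not> {x. ?S x = x} \<subseteq> F"
    proof
      assume "{x. ?S x = x} \<subseteq> F"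
      then have "vec.dim {x. ?S x = x} \<le> vec.dim F" by (rule vec.dim_subset)
      then show False using dFix by simp
    qed
    then obtain x where x: "?S x = x" "x \<notin> F" by blast
    then have xW: "x \<notin> W" using Fix_W[OF eS] by blast
    then have cx: "coef v0 x \<noteq> 0" using coef_W[OF v0] by blast
    define x' where "x' = (1 / coef v0 x) *s x"
    have Sx': "?S x' = x'" unfolding x'_def using vec.linear_scale[OF lS] x by simp
    have cx': "coef v0 x' = 1" unfolding x'_def using coef_scale[OF v0] cx by simp
    then have x'W: "x' \<notin> W" using coef_W[OF v0, of x'] by simp
    define U where "U = vec.span (insert x' D)"
    have Uc: "v \<in> U \<longleftrightarrow> (\<exists>k. v - k *s x' \<in> D)" for v unfolding U_def using vec.span_insert spD by blast
    have sU: "vec.subspace U" unfolding U_def by (rule vec.subspace_span)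
    have invU: "?S ` U \<subseteq> U"
    proof
      fix y assume "y \<in> ?S ` U"
      then obtain v where v: "v \<in> U" "y = ?S v" by auto
      then obtain k where k: "v - k *s x' \<in> D" using Uc by blast
      have "?S (v - k *s x') = y - k *s x'" using v vec.linear_diff[OF lS] vec.linear_scale[OF lS] Sx' by simp
      then have "y - k *s x' \<in> D" using D_inv[OF eS k] by simp
      then show "y \<in> U" using Uc by blast
    qed
    have NU: "\<forall>v. (?S ^^ N) v \<in> U"
    proof
      fix v
      let ?y = "(?S ^^ N) v"
      have fy: "?S ?y = ?y" using N by simp
      have "coef v0 (?y - coef v0 ?y *s x') = 0" using coef_diff[OF v0] coef_scale[OF v0] cx' by simp
      then have "?y - coef v0 ?y *s x' \<in> W" using coef_W[OF v0] by blast
      moreover have "?S (?y - coef v0 ?y *s x') = ?y - coef v0 ?y *s x'"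
        using vec.linear_diff[OF lS] vec.linear_scale[OF lS] Sx' fy by simp
      ultimately have "?y - coef v0 ?y *s x' \<in> F" using Fix_W[OF eS] by blast
      then show "?y \<in> U" using Uc F_D by blast
    qed
    have "x' \<notin> vec.span D" using spD D_W x'W by blast
    then have "vec.dim U = vec.dim D + 1" unfolding U_def by (simp add: vec.dim_insert)
    then have "CARD('n) \<le> vec.dim U + (m - 1)" using dim_D m_pos by simp
    then have "(?S ^^ (m - 1)) c \<in> U" using chain_lemma[OF lS sU invU NU] by blast
    then have "v0 \<in> U" using S_c_m[OF eS] by simp
    then obtain k where k: "v0 - k *s x' \<in> D" using Uc by blast
    then have "coef v0 (v0 - k *s x') = 0" using phi0 D_W by blast
    then have "k = 1" using coef_diff[OF v0] coef_scale[OF v0] coef_self[OF v0] cx' by simp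
    then have d: "v0 - x' \<in> D" using k by simp
    have e: "?S v0 = x' + ?S (v0 - x')" using vec.linear_add[OF lS, of x' "v0 - x'"] Sx' by simp
    have "u - v0 = ?S (v0 - x') - (v0 - x')" using Sx_v0[of u] e by (simp add: algebra_simps)
    then show "u - v0 \<in> Y" using Y_ext[OF eS] d by blast
  next
    assume "u - v0 \<in> Y"
    then obtain z where z: "z \<in> D" "u - v0 = ?S z - z" using Y_ext[OF eS] by blast
    have zW: "z \<in> W" using z D_W by blast
    define g where "g v = (?S ^^ m) v - (?S ^^ (m - 1)) v" for v
    have lg: "lin g" unfolding g_def by (rule lin_diff[OF lP lP])
    let ?Z = "{v. g v \<in> Y}"
    have sZ: "vec.subspace ?Z"
      using vec.linear_subspace_vimage[OF lg Y_sub] by (simp add: vimage_def)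
    obtain k where km: "m = Suc k" using m_pos by (cases m) auto
    have gS: "g v = ?S w - w" if "w = (?S ^^ (m - 1)) v" for v w
      unfolding g_def that using km by simp
    have "D \<subseteq> ?Z"
    proof
      fix d assume d: "d \<in> D"
      have "(?S ^^ (m - 1)) d \<in> D" using D_pow[OF eS d] .
      then show "d \<in> ?Z" using gS[OF refl, of d] Y_ext[OF eS] by auto
    qed
    moreover have "b ` {..<m} \<subseteq> ?Z"
    proof
      fix x assume "x \<in> b ` {..<m}"
      then obtain j where j: "j < m" "x = b j" by auto
      have xj: "x = (?S ^^ j) c" using b_ext[OF eS, of j] j by simp
      have "g x = (?S ^^ j) ((?S ^^ m) c) - (?S ^^ j) ((?S ^^ (m - 1)) c)"
        unfolding g_def xj by (simp add: funpow_comm)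
      also have "\<dots> = (?S ^^ j) (u - v0)"
        using S_c_m[OF eS] S_c_m'[OF eS] Sx_v0 vec.linear_diff[OF lP] by simp
      also have "\<dots> = (?S ^^ j) (?S z) - (?S ^^ j) z" using z vec.linear_diff[OF lP] by simp
      also have "\<dots> = ?S ((?S ^^ j) z) - (?S ^^ j) z" by (simp add: funpow_swap1)
      finally have "g x = ?S ((?S ^^ j) z) - (?S ^^ j) z" .
      moreover have "(?S ^^ j) z \<in> D" using D_pow[OF eS z(1)] .
      ultimately show "x \<in> ?Z" using Y_ext[OF eS] by auto
    qed
    ultimately have "D \<union> b ` {..<m} \<subseteq> ?Z" by (rule Un_least)
    then have spZ: "vec.span (D \<union> b ` {..<m}) \<subseteq> ?Z" using vec.span_minimal[OF _ sZ] by simp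
    have Zall: "g v \<in> Y" for v
    proof -
      have "v \<in> ?Z" using span_all spZ by (meson UNIV_I subsetD)
      then show ?thesis by simp
    qed
    have N: "\<forall>v. (?S ^^ Suc (K + k)) v = (?S ^^ (K + k)) v"
    proof
      fix v
      have "(?S ^^ K) (g v) = 0" using Y_kill[OF eS Zall] .
      then have "(?S ^^ K) ((?S ^^ m) v) - (?S ^^ K) ((?S ^^ k) v) = 0"
        unfolding g_def using vec.linear_diff[OF lP] km by simp
      then show "(?S ^^ Suc (K + k)) v = (?S ^^ (K + k)) v"
        using km by (simp add: funpow_add funpow_swap1)
    qed
    have semi: "semi_idempotent ?S" by (rule semi_idem_I[OF lS N])
    define x where "x = v0 - z"
    have Sxx: "?S x = x"
    proof -
      have "?S x = u - ?S z" unfolding x_def using vec.linear_diff[OF lS] Sx_v0 by simp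
      also have "\<dots> = x" unfolding x_def using z(2) by (simp add: algebra_simps)
      finally show ?thesis .
    qed
    have cx: "coef v0 x = 1" unfolding x_def using coef_diff[OF v0] coef_self[OF v0] phi0[OF zW] by simp
    have xW: "x \<notin> W" using cx coef_W[OF v0, of x] by simp
    have "{y. ?S y = y} = vec.span (insert x F)"
    proof
      show "{y. ?S y = y} \<subseteq> vec.span (insert x F)"
      proof
        fix y assume y: "y \<in> {y. ?S y = y}"
        have "coef v0 (y - coef v0 y *s x) = 0" using coef_diff[OF v0] coef_scale[OF v0] cx by simp
        then have "y - coef v0 y *s x \<in> W" using coef_W[OF v0] by blast
        moreover have "y - coef v0 y *s x \<in> {y. ?S y = y}"
          using y Sxx vec.subspace_diff[OF sFix] vec.subspace_scale[OF sFix] by simp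
        ultimately have "y - coef v0 y *s x \<in> F" using Fix_W[OF eS] by blast
        then show "y \<in> vec.span (insert x F)" using vec.span_insert spF by blast
      qed
      show "vec.span (insert x F) \<subseteq> {y. ?S y = y}"
        using vec.span_minimal[OF _ sFix] FFix Sxx by simp
    qed
    moreover have "x \<notin> vec.span F" using spF F_W xW by blast
    ultimately have "vec.dim {y. ?S y = y} = vec.dim F + 1" by (simp add: vec.dim_insert)
    then show "semi_idempotent ?S \<and> srk UNIV ?S = vec.dim F + 1" using semi srk_total[OF lS N] by simp
  qed
qed


lemma card_ext:
  "card {S. lin S \<and> semi_idempotent S \<and> (\<forall>w\<in>W. S w = T w) \<and> R S} =
   card {u. semi_idempotent (Ext v0 u) \<and> R (Ext v0 u)}"
proof -
  have "{S. lin S \<and> semi_idempotent S \<and> (\<forall>w\<in>W. S w = T w) \<and> R S} =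
        Ext v0 ` {u. semi_idempotent (Ext v0 u) \<and> R (Ext v0 u)}"
  proof
    show "{S. lin S \<and> semi_idempotent S \<and> (\<forall>w\<in>W. S w = T w) \<and> R S} \<subseteq>
        Ext v0 ` {u. semi_idempotent (Ext v0 u) \<and> R (Ext v0 u)}"
    proof
      fix S assume "S \<in> {S. lin S \<and> semi_idempotent S \<and> (\<forall>w\<in>W. S w = T w) \<and> R S}"
      then have S: "ext S" "semi_idempotent S" "R S" unfolding ext_def by auto
      then have e: "Ext v0 (S v0) = S" using Ext_unique[OF v0, of S] by simp
      have "S v0 \<in> {u. semi_idempotent (Ext v0 u) \<and> R (Ext v0 u)}" using S e by simp
      then show "S \<in> Ext v0 ` {u. semi_idempotent (Ext v0 u) \<and> R (Ext v0 u)}"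
        by (intro image_eqI[where x = "S v0" and f = "Ext v0"]) (simp_all add: e)
    qed
    show "Ext v0 ` {u. semi_idempotent (Ext v0 u) \<and> R (Ext v0 u)} \<subseteq>
        {S. lin S \<and> semi_idempotent S \<and> (\<forall>w\<in>W. S w = T w) \<and> R S}"
      using Sx_ext unfolding ext_def by auto
  qed
  moreover have "inj_on (Ext v0) X" for X
  proof (rule inj_onI)
    fix x y assume "Ext v0 x = Ext v0 y"
    then have "Ext v0 x v0 = Ext v0 y v0" by simp
    then show "x = y" using Sx_v0 by simp
  qed
  ultimately show ?thesis by (simp add: card_image)
qed

lemma card_shift: "card {u. u - v0 \<in> A} = card A"
proof -
  have "u \<in> (\<lambda>y. y + v0) ` A" if "u - v0 \<in> A" for u
    using that by (intro image_eqI[of _ _ "u - v0"]) simp_all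
  then have "{u. u - v0 \<in> A} = (\<lambda>y. y + v0) ` A" by auto
  moreover have "inj_on (\<lambda>y. y + v0) A" by (rule inj_onI) simp
  ultimately show ?thesis by (simp add: card_image)
qed

lemma card_sum:
  assumes "A \<subseteq> Y"
  shows "card ((\<lambda>(f, y). f + y) ` (F \<times> A)) = card F * card A"
proof -
  have "inj_on (\<lambda>(f, y). f + y) (F \<times> A)"
  proof (rule inj_onI, clarify)
    fix f y f' y' assume h: "f \<in> F" "y \<in> A" "f' \<in> F" "y' \<in> A" "f + y = f' + y'"
    have "f - f' = y' - y" using h(5) by (simp add: algebra_simps)
    moreover have "f - f' \<in> F" using h vec.subspace_diff[OF F_sub] by blast
    moreover have "y' - y \<in> Y" using h assms vec.subspace_diff[OF Y_sub] by blast
    ultimately have "f - f' = 0" using FY[of "f - f'"] by simp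
    then show "f = f' \<and> y = y'" using h(5) by simp
  qed
  then show ?thesis by (simp add: card_image card_cartesian_product)
qed

lemma Dfy: "z \<in> D \<Longrightarrow> \<exists>f\<in>F. \<exists>y\<in>Y. z = f + y"
proof -
  assume z: "z \<in> D"
  have "z = (S0 ^^ K) z + (z - (S0 ^^ K) z)" by simp
  then show ?thesis using decomp[OF z] by blast
qed

lemma D_img: "D = (\<lambda>(f, y). f + y) ` (F \<times> Y)"
proof
  show "D \<subseteq> (\<lambda>(f, y). f + y) ` (F \<times> Y)"
  proof
    fix z assume "z \<in> D"
    then obtain f y where "f \<in> F" "y \<in> Y" "z = f + y" using Dfy by blast
    then show "z \<in> (\<lambda>(f, y). f + y) ` (F \<times> Y)" by force
  qed
  show "(\<lambda>(f, y). f + y) ` (F \<times> Y) \<subseteq> D"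
  proof
    fix z assume "z \<in> (\<lambda>(f, y). f + y) ` (F \<times> Y)"
    then obtain f y where "f \<in> F" "y \<in> Y" "z = f + y" by auto
    then show "z \<in> D" using F_D Y_D vec.subspace_add[OF D_sub] by blast
  qed
qed

lemma D_TW_img: "D \<inter> T ` W = (\<lambda>(f, y). f + y) ` (F \<times> (Y \<inter> T ` W))"
proof
  show "D \<inter> T ` W \<subseteq> (\<lambda>(f, y). f + y) ` (F \<times> (Y \<inter> T ` W))"
  proof
    fix z assume z: "z \<in> D \<inter> T ` W"
    then obtain f y where fy: "f \<in> F" "y \<in> Y" "z = f + y" using Dfy by blast
    have "y = z - f" using fy by simp
    then have "y \<in> T ` W" using z fy F_TW vec.subspace_diff[OF TW_sub] by blast
    then show "z \<in> (\<lambda>(f, y). f + y) ` (F \<times> (Y \<inter> T ` W))" using fy by force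
  qed
  show "(\<lambda>(f, y). f + y) ` (F \<times> (Y \<inter> T ` W)) \<subseteq> D \<inter> T ` W"
  proof
    fix z assume "z \<in> (\<lambda>(f, y). f + y) ` (F \<times> (Y \<inter> T ` W))"
    then obtain f y where h: "f \<in> F" "y \<in> Y" "y \<in> T ` W" "z = f + y" by auto
    have "z \<in> D" using h F_D Y_D vec.subspace_add[OF D_sub] by blast
    moreover have "z \<in> T ` W" using h F_TW vec.subspace_add[OF TW_sub] by blast
    ultimately show "z \<in> D \<inter> T ` W" by blast
  qed
qed

lemma D_nTW_img: "D - T ` W = (\<lambda>(f, y). f + y) ` (F \<times> (Y - T ` W))"
proof
  show "D - T ` W \<subseteq> (\<lambda>(f, y). f + y) ` (F \<times> (Y - T ` W))"
  proof
    fix z assume z: "z \<in> D - T ` W"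
    then obtain f y where fy: "f \<in> F" "y \<in> Y" "z = f + y" using Dfy by blast
    have "y \<notin> T ` W"
    proof
      assume "y \<in> T ` W"
      then have "f + y \<in> T ` W" using fy F_TW vec.subspace_add[OF TW_sub] by blast
      then show False using z fy by simp
    qed
    then show "z \<in> (\<lambda>(f, y). f + y) ` (F \<times> (Y - T ` W))" using fy by force
  qed
  show "(\<lambda>(f, y). f + y) ` (F \<times> (Y - T ` W)) \<subseteq> D - T ` W"
  proof
    fix z assume "z \<in> (\<lambda>(f, y). f + y) ` (F \<times> (Y - T ` W))"
    then obtain f y where h: "f \<in> F" "y \<in> Y" "y \<notin> T ` W" and zf: "z = f + y" by auto
    have "f + y \<in> D" using h F_D Y_D vec.subspace_add[OF D_sub] by blast
    moreover have "f + y \<notin> T ` W"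
    proof
      assume "f + y \<in> T ` W"
      then have "(f + y) - f \<in> T ` W" using h F_TW vec.subspace_diff[OF TW_sub] by blast
      then show False using h by simp
    qed
    ultimately show "z \<in> D - T ` W" using zf by auto
  qed
qed

lemma part1: "e2 W T (srk W T) = CARD('a) ^ srk W T * e2 W T (srk W T + 1)"
proof -
  have "e2 W T (srk W T) = card {u. semi_idempotent (Ext v0 u) \<and> srk UNIV (Ext v0 u) = vec.dim F}"
    unfolding e2_def srkT using card_ext[of "\<lambda>S. srk UNIV S = vec.dim F"] by simp
  also have "\<dots> = card D" using A0 by simp
  also have "\<dots> = card F * card Y" using D_img card_sum[of Y] by simp
  finally have 1: "e2 W T (srk W T) = card F * card Y" .
  have "e2 W T (srk W T + 1) = card {u. semi_idempotent (Ext v0 u) \<and> srk UNIV (Ext v0 u) = vec.dim F + 1}"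
    unfolding e2_def srkT using card_ext[of "\<lambda>S. srk UNIV S = vec.dim F + 1"] by simp
  also have "\<dots> = card {u. u - v0 \<in> Y}" using A1 by simp
  also have "\<dots> = card Y" by (rule card_shift)
  finally show ?thesis using 1 card_subspace[OF F_sub] srkT by simp
qed

lemma part2:
  assumes "\<not> T ` W \<subseteq> W"
  shows "e3 W T (prank W T) (srk W T) = CARD('a) ^ srk W T * e3 W T (prank W T) (srk W T + 1) \<and>
         e3 W T (prank W T + 1) (srk W T) = CARD('a) ^ srk W T * e3 W T (prank W T + 1) (srk W T + 1)"
proof -
  have v: "v0 \<in> T ` W" using v0_TW[OF assms] .
  have TWs: "u \<in> T ` W \<longleftrightarrow> u - v0 \<in> T ` W" for u
  proof
    assume "u \<in> T ` W" then show "u - v0 \<in> T ` W" using v vec.subspace_diff[OF TW_sub] by blast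
  next
    assume "u - v0 \<in> T ` W"
    then have "(u - v0) + v0 \<in> T ` W" using v vec.subspace_add[OF TW_sub] by blast
    then show "u \<in> T ` W" by simp
  qed
  have cF: "card F = CARD('a) ^ srk W T" using card_subspace[OF F_sub] srkT by simp
  have r1: "prank UNIV (Ext v0 u) = prank W T \<longleftrightarrow> u \<in> T ` W" for u using rank_Sx by simp
  have r2: "prank UNIV (Ext v0 u) = prank W T + 1 \<longleftrightarrow> u \<notin> T ` W" for u using rank_Sx by simp
  have a: "e3 W T (prank W T) (srk W T) = card F * card (Y \<inter> T ` W)"
  proof -
    have "e3 W T (prank W T) (srk W T) = card {u. semi_idempotent (Ext v0 u) \<and>
        (prank UNIV (Ext v0 u) = prank W T \<and> srk UNIV (Ext v0 u) = vec.dim F)}"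
      unfolding e3_def srkT using card_ext[of "\<lambda>S. prank UNIV S = prank W T \<and> srk UNIV S = vec.dim F"] by simp
    also have "{u. semi_idempotent (Ext v0 u) \<and>
        (prank UNIV (Ext v0 u) = prank W T \<and> srk UNIV (Ext v0 u) = vec.dim F)} = D \<inter> T ` W"
      using A0 r1 by blast
    finally show ?thesis using D_TW_img card_sum[of "Y \<inter> T ` W"] by simp
  qed
  have b: "e3 W T (prank W T) (srk W T + 1) = card (Y \<inter> T ` W)"
  proof -
    have "e3 W T (prank W T) (srk W T + 1) = card {u. semi_idempotent (Ext v0 u) \<and>
        (prank UNIV (Ext v0 u) = prank W T \<and> srk UNIV (Ext v0 u) = vec.dim F + 1)}"
      unfolding e3_def srkT using card_ext[of "\<lambda>S. prank UNIV S = prank W T \<and> srk UNIV S = vec.dim F + 1"] by simp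
    also have "{u. semi_idempotent (Ext v0 u) \<and>
        (prank UNIV (Ext v0 u) = prank W T \<and> srk UNIV (Ext v0 u) = vec.dim F + 1)} = {u. u - v0 \<in> Y \<inter> T ` W}"
      using A1 r1 TWs by blast
    finally show ?thesis using card_shift[of "Y \<inter> T ` W"] by simp
  qed
  have c: "e3 W T (prank W T + 1) (srk W T) = card F * card (Y - T ` W)"
  proof -
    have "e3 W T (prank W T + 1) (srk W T) = card {u. semi_idempotent (Ext v0 u) \<and>
        (prank UNIV (Ext v0 u) = prank W T + 1 \<and> srk UNIV (Ext v0 u) = vec.dim F)}"
      unfolding e3_def srkT using card_ext[of "\<lambda>S. prank UNIV S = prank W T + 1 \<and> srk UNIV S = vec.dim F"] by simp
    also have "{u. semi_idempotent (Ext v0 u) \<and>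
        (prank UNIV (Ext v0 u) = prank W T + 1 \<and> srk UNIV (Ext v0 u) = vec.dim F)} = D - T ` W"
      using A0 r2 by blast
    finally show ?thesis using D_nTW_img card_sum[of "Y - T ` W"] by simp
  qed
  have d: "e3 W T (prank W T + 1) (srk W T + 1) = card (Y - T ` W)"
  proof -
    have "e3 W T (prank W T + 1) (srk W T + 1) = card {u. semi_idempotent (Ext v0 u) \<and>
        (prank UNIV (Ext v0 u) = prank W T + 1 \<and> srk UNIV (Ext v0 u) = vec.dim F + 1)}"
      unfolding e3_def srkT using card_ext[of "\<lambda>S. prank UNIV S = prank W T + 1 \<and> srk UNIV S = vec.dim F + 1"] by simp
    also have "{u. semi_idempotent (Ext v0 u) \<and>
        (prank UNIV (Ext v0 u) = prank W T + 1 \<and> srk UNIV (Ext v0 u) = vec.dim F + 1)} = {u. u - v0 \<in> Y - T ` W}"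
      using A1 r2 TWs by blast
    finally show ?thesis using card_shift[of "Y - T ` W"] by simp
  qed
  have 1: "e3 W T (prank W T) (srk W T) = CARD('a) ^ srk W T * e3 W T (prank W T) (srk W T + 1)"
    unfolding a b cF[symmetric] ..
  have 2: "e3 W T (prank W T + 1) (srk W T) = CARD('a) ^ srk W T * e3 W T (prank W T + 1) (srk W T + 1)"
    unfolding c d cF[symmetric] ..
  from 1 2 show ?thesis by (rule conjI)
qed

end

theorem lemma3p3:
  fixes W :: "('a::{field,finite}^'n) set" and T :: "'a^'n \<Rightarrow> 'a^'n"
  assumes "vec.subspace W"
    and "vec.dim W + 1 = CARD('n)"
    and "plinear W T"
  shows "e2 W T (srk W T) = CARD('a) ^ srk W T * e2 W T (srk W T + 1) \<and>
         (\<not> T ` W \<subseteq> W \<longrightarrow>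
           e3 W T (prank W T) (srk W T) = CARD('a) ^ srk W T * e3 W T (prank W T) (srk W T + 1) \<and>
           e3 W T (prank W T + 1) (srk W T) = CARD('a) ^ srk W T * e3 W T (prank W T + 1) (srk W T + 1))"
proof (cases "\<exists>S0. Vector_Spaces.linear (*s) (*s) S0 \<and> (\<forall>w\<in>W. S0 w = T w) \<and> semi_idempotent S0")
  case True
  then obtain S0 where S0: "Vector_Spaces.linear (*s) (*s) S0" "\<forall>w\<in>W. S0 w = T w" "semi_idempotent S0" by blast
  interpret setting W T
    by (unfold_locales) (rule assms(1), rule assms(2), rule assms(3))
  have eS0: "ext S0" unfolding ext_def using S0(1,2) by blast
  interpret setting2 W T S0
    by (unfold_locales) (rule eS0, rule S0(3))
  have p1: "e2 W T (srk W T) = CARD('a) ^ srk W T * e2 W T (srk W T + 1)" by (rule part1)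
  have p2: "\<not> T ` W \<subseteq> W \<longrightarrow>
           e3 W T (prank W T) (srk W T) = CARD('a) ^ srk W T * e3 W T (prank W T) (srk W T + 1) \<and>
           e3 W T (prank W T + 1) (srk W T) = CARD('a) ^ srk W T * e3 W T (prank W T + 1) (srk W T + 1)"
    by (rule impI, rule part2)
  from p1 p2 show ?thesis by (rule conjI)
next
  case False
  have "{S. Vector_Spaces.linear (*s) (*s) S \<and> semi_idempotent S \<and> (\<forall>w\<in>W. S w = T w) \<and> srk UNIV S = j} = {}" for j
    using False by auto
  then have z2: "e2 W T j = 0" for j unfolding e2_def by simp
  have "{S. Vector_Spaces.linear (*s) (*s) S \<and> semi_idempotent S \<and> (\<forall>w\<in>W. S w = T w) \<and>
      prank UNIV S = i \<and> srk UNIV S = j} = {}" for i j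
    using False by auto
  then have z3: "e3 W T i j = 0" for i j unfolding e3_def by simp
  show ?thesis unfolding z2 z3 by simp
qed

end
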